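(* Let $p\geq2$, $n_1,\dots,n_l\geq1$ be integers with $\sum_j p^{-n_j}=1$ and let $T_p$ be the map satisfying Condition 1 with slopes $\Lambda_j=p^{n_j}$. Let $U$ be a quantization of $T_p$ acting on $\mathcal H_\Bbbk\cong\mathbb C^{N_\Bbbk}$ with $N_\Bbbk=p^\Bbbk$ (with respect to the partition of $[0,1]$ into $p^\Bbbk$ equal intervals), and set $n_{\mathrm E}=\lfloor\log N_\Bbbk/\log\Lambda_{\max}\rfloor$, $\Lambda_{\max}=\max_j\Lambda_j$. Then for every base-$p$ cylinder $[\![\mathrm x]\!]$ of length $|\mathrm x|=m$, $$U^{-n}P_{[\![\mathrm x]\!]}U^n=P_{T_p^{-n}[\![\mathrm x]\!]}\qquad\text{for all } n \text{ with } n+m\leq n_{\mathrm E}.$$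
   Context: Condition 1: $[0,1]$ is divided into consecutive intervals $I_1,\dots,I_l$ with $|I_j|=\Lambda_j^{-1}$, and $T_p$ is affine with slope $\Lambda_j$ on $I_j$ mapping $I_j$ onto $[0,1]$ (so $T_p(x)=p^{n_j}x\bmod 1$ on $I_j$). For a word $\mathrm x=\mathrm x_1\dots\mathrm x_m$ over $\{0,\dots,p-1\}$, $[\![\mathrm x]\!]$ is the interval of points whose first $m$ base-$p$ digits are $\mathrm x_1,\dots,\mathrm x_m$. Let $E_i=[(i-1)p^{-\Bbbk},ip^{-\Bbbk}]$; with $B(i,j)=|E_i\cap T_p^{-1}E_j|/|E_i|$, a quantization is a unitary matrix $U$ with $B(j,i)=|U(i,j)|^2$ for all $i,j$. For a finite union $Y$ of intervals $E_i$, $P_Y$ is the diagonal matrix with entry $1$ at $i$ if $E_i\subseteq Y$ and $0$ otherwise (i.e. $P_Y=\mathrm{Op}(\chi_Y)$, the diagonal matrix of averages of $\chi_Y$ over the $E_i$). *)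

theory Defs
  imports "HOL-Analysis.Analysis" "Jordan_Normal_Form.Matrix"
begin

definition left_end :: "nat \<Rightarrow> nat list \<Rightarrow> nat \<Rightarrow> real" where
  "left_end p ns j = (\<Sum>i<j. 1 / real p ^ (ns ! i))"

definition condition1 :: "nat \<Rightarrow> nat list \<Rightarrow> (real \<Rightarrow> real) \<Rightarrow> bool" where
  "condition1 p ns T \<longleftrightarrow>
     (\<forall>j < length ns. \<forall>x. left_end p ns j < x \<and> x < left_end p ns (Suc j) \<longrightarrow>
        T x = real p ^ (ns ! j) * (x - left_end p ns j))"

(* E_i = [i/N, (i+1)/N], i = 0..N-1 (0-based version of the paper's E_i). *)
definition Eint :: "nat \<Rightarrow> nat \<Rightarrow> real set" where
  "Eint N i = {real i / real N .. (real i + 1) / real N}"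

definition preim :: "(real \<Rightarrow> real) \<Rightarrow> nat \<Rightarrow> real set \<Rightarrow> real set" where
  "preim T n Y = {x \<in> {0..1}. (T ^^ n) x \<in> Y}"

definition Bmat :: "(real \<Rightarrow> real) \<Rightarrow> nat \<Rightarrow> nat \<Rightarrow> nat \<Rightarrow> real" where
  "Bmat T N i j = measure lebesgue (Eint N i \<inter> preim T 1 (Eint N j)) / measure lebesgue (Eint N i)"

definition cadjoint :: "complex mat \<Rightarrow> complex mat" where
  "cadjoint A = mat (dim_col A) (dim_row A) (\<lambda>(i,j). cnj (A $$ (j,i)))"

definition unitary_mat :: "nat \<Rightarrow> complex mat \<Rightarrow> bool" where
  "unitary_mat N U \<longleftrightarrow> U \<in> carrier_mat N N \<and>
     cadjoint U * U = 1\<^sub>m N \<and> U * cadjoint U = 1\<^sub>m N"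

definition quantization :: "(real \<Rightarrow> real) \<Rightarrow> nat \<Rightarrow> complex mat \<Rightarrow> bool" where
  "quantization T N U \<longleftrightarrow> unitary_mat N U \<and>
     (\<forall>i<N. \<forall>j<N. Bmat T N j i = (cmod (U $$ (i,j)))\<^sup>2)"

definition mat_inv :: "nat \<Rightarrow> complex mat \<Rightarrow> complex mat" where
  "mat_inv N U = (THE V. V \<in> carrier_mat N N \<and> V * U = 1\<^sub>m N \<and> U * V = 1\<^sub>m N)"

definition mat_neg_pow :: "nat \<Rightarrow> complex mat \<Rightarrow> nat \<Rightarrow> complex mat" where
  "mat_neg_pow N U n = (mat_inv N U) ^\<^sub>m n"

(* P_Y = Op(chi_Y): diagonal matrix of averages of chi_Y over the E_i *)
definition Pop :: "nat \<Rightarrow> real set \<Rightarrow> complex mat" where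
  "Pop N Y = mat N N (\<lambda>(i,j). if i = j then
      complex_of_real (measure lebesgue (Eint N i \<inter> Y) / measure lebesgue (Eint N i)) else 0)"

definition cylinder :: "nat \<Rightarrow> nat list \<Rightarrow> real set" where
  "cylinder p xs = (let c = (\<Sum>k<length xs. real (xs ! k) / real p ^ (Suc k))
                    in {c .. c + 1 / real p ^ length xs})"

end

theory Submission
  imports Defs
begin



lemma meas_Icc: "measure lebesgue {l..u::real} = (if l \<le> u then u - l else 0)"
  by (simp add: measure_completion)

lemma meas_oi_fin:
  fixes l u :: real assumes "l \<le> u" "finite F"
  shows "measure lebesgue ({l<..<u} \<union> F) = u - l"
proof -
  have "F \<in> null_sets lborel" using assms(2) by (rule finite_imp_null_set_lborel)
  then have nF: "F \<in> null_sets lebesgue" by (rule null_sets_completionI)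
  have "{l<..<u} \<in> sets lebesgue" by auto
  then have "measure lebesgue ({l<..<u} \<union> F) = measure lebesgue {l<..<u}"
    using nF by (rule measure_Un_null_set)
  also have "\<dots> = u - l" using assms(1) by (simp add: measure_completion)
  finally show ?thesis .
qed

lemma fin_meas0: "finite (A::real set) \<Longrightarrow> measure lebesgue A = 0"
  using meas_oi_fin[of 0 0 A] by simp

definition oiN :: "nat \<Rightarrow> nat \<Rightarrow> real set" where
  "oiN N i = {real i / real N <..< (real i + 1) / real N}"

lemma dval1:
  assumes "N > 0" "oiN N i \<subseteq> Z"
  shows "measure lebesgue (Eint N i \<inter> Z) / measure lebesgue (Eint N i) = 1"
proof -
  let ?l = "real i / real N" and ?u = "(real i + 1) / real N"
  have lu: "?l < ?u" using assms(1) by (simp add: divide_strict_right_mono)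
  have "Eint N i \<inter> Z = {?l<..<?u} \<union> (Eint N i \<inter> Z \<inter> {?l, ?u})"
    using assms(2) unfolding Eint_def oiN_def by auto
  then have "measure lebesgue (Eint N i \<inter> Z) = ?u - ?l"
    using meas_oi_fin[of ?l ?u "Eint N i \<inter> Z \<inter> {?l, ?u}"] lu by auto
  moreover have "measure lebesgue (Eint N i) = ?u - ?l" unfolding Eint_def meas_Icc using lu by auto
  ultimately show ?thesis using lu assms(1) by simp
qed

lemma dval0:
  assumes "oiN N i \<inter> Z = {}"
  shows "measure lebesgue (Eint N i \<inter> Z) / measure lebesgue (Eint N i) = 0"
proof -
  let ?l = "real i / real N" and ?u = "(real i + 1) / real N"
  have "Eint N i \<inter> Z \<subseteq> {?l, ?u}"
  proof
    fix x assume x: "x \<in> Eint N i \<inter> Z"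
    then have "x \<notin> {?l<..<?u}" using assms unfolding oiN_def by auto
    then show "x \<in> {?l, ?u}" using x unfolding Eint_def by auto
  qed
  then have "finite (Eint N i \<inter> Z)" by (rule finite_subset) auto
  then show ?thesis by (simp add: fin_meas0)
qed

lemma Bpos:
  assumes "Bmat T N a i \<noteq> 0"
  shows "\<exists>x \<in> oiN N a. T x \<in> Eint N i \<and> 0 \<le> x \<and> x \<le> 1"
proof (rule ccontr)
  assume H: "\<not> ?thesis"
  let ?l = "real a / real N" and ?u = "(real a + 1) / real N"
  have "Eint N a \<inter> preim T 1 (Eint N i) \<subseteq> {?l, ?u}"
    using H unfolding Eint_def oiN_def preim_def by auto
  then have "finite (Eint N a \<inter> preim T 1 (Eint N i))" by (rule finite_subset) auto
  then have "Bmat T N a i = 0" unfolding Bmat_def by (simp add: fin_meas0)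
  then show False using assms by simp
qed




lemma cadj_carrier: "U \<in> carrier_mat N M \<Longrightarrow> cadjoint U \<in> carrier_mat M N"
  unfolding cadjoint_def by auto

lemma cadj_index: "U \<in> carrier_mat N M \<Longrightarrow> i < M \<Longrightarrow> j < N \<Longrightarrow> cadjoint U $$ (i,j) = cnj (U $$ (j,i))"
  unfolding cadjoint_def by auto

lemma mat_inv_unitary:
  assumes "unitary_mat N U" shows "mat_inv N U = cadjoint U"
proof -
  have U: "U \<in> carrier_mat N N" and h1: "cadjoint U * U = 1\<^sub>m N" and h2: "U * cadjoint U = 1\<^sub>m N"
    using assms unfolding unitary_mat_def by auto
  have C: "cadjoint U \<in> carrier_mat N N" using U by (rule cadj_carrier)
  show ?thesis unfolding mat_inv_def
  proof (rule the_equality)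
    show "cadjoint U \<in> carrier_mat N N \<and> cadjoint U * U = 1\<^sub>m N \<and> U * cadjoint U = 1\<^sub>m N"
      using C h1 h2 by auto
  next
    fix V assume V: "V \<in> carrier_mat N N \<and> V * U = 1\<^sub>m N \<and> U * V = 1\<^sub>m N"
    have "V = V * (U * cadjoint U)" using V h2 by auto
    also have "\<dots> = (V * U) * cadjoint U" using V U C by (metis assoc_mult_mat)
    also have "\<dots> = cadjoint U" using V C by auto
    finally show "V = cadjoint U" .
  qed
qed

definition dv :: "nat \<Rightarrow> real set \<Rightarrow> nat \<Rightarrow> complex" where
  "dv N Z i = complex_of_real (measure lebesgue (Eint N i \<inter> Z) / measure lebesgue (Eint N i))"

lemma Pop_index: "a < N \<Longrightarrow> b < N \<Longrightarrow> Pop N Z $$ (a,b) = (if a = b then dv N Z a else 0)"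
  unfolding Pop_def dv_def by auto

lemma step_mat:
  assumes U: "unitary_mat N U" and N: "N > 0"
    and H: "\<forall>a<N. \<exists>c. (c \<longrightarrow> oiN N a \<subseteq> W) \<and> (\<not>c \<longrightarrow> oiN N a \<inter> W = {}) \<and>
       (\<forall>i<N. U $$ (i,a) \<noteq> 0 \<longrightarrow> (c \<longrightarrow> oiN N i \<subseteq> Z) \<and> (\<not>c \<longrightarrow> oiN N i \<inter> Z = {}))"
  shows "cadjoint U * Pop N Z * U = Pop N W"
proof -
  have UC: "U \<in> carrier_mat N N" and h1: "cadjoint U * U = 1\<^sub>m N"
    using U unfolding unitary_mat_def by auto
  have C: "cadjoint U \<in> carrier_mat N N" using UC by (rule cadj_carrier)
  have P: "Pop N Z \<in> carrier_mat N N" "Pop N W \<in> carrier_mat N N" unfolding Pop_def by auto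
  have CP: "(cadjoint U * Pop N Z) $$ (a,i) = cnj (U $$ (i,a)) * dv N Z i" if "a < N" "i < N" for a i
  proof -
    have "(cadjoint U * Pop N Z) $$ (a,i) = (\<Sum>l\<in>{0..<N}. cadjoint U $$ (a,l) * Pop N Z $$ (l,i))"
      using that C P by (simp add: scalar_prod_def)
    also have "\<dots> = (\<Sum>l\<in>{0..<N}. if l = i then cnj (U $$ (i,a)) * dv N Z i else 0)"
      by (rule sum.cong) (use that UC in \<open>auto simp: cadj_index Pop_index\<close>)
    also have "\<dots> = cnj (U $$ (i,a)) * dv N Z i" using that by simp
    finally show ?thesis .
  qed
  show ?thesis
  proof (rule eq_matI)
    show "dim_row (cadjoint U * Pop N Z * U) = dim_row (Pop N W)"
         "dim_col (cadjoint U * Pop N Z * U) = dim_col (Pop N W)" using C UC P by auto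
    fix a b assume a: "a < dim_row (Pop N W)" and b: "b < dim_col (Pop N W)"
    then have a: "a < N" and b: "b < N" using P by auto
    obtain c where c1: "c \<longrightarrow> oiN N a \<subseteq> W" and c2: "\<not>c \<longrightarrow> oiN N a \<inter> W = {}"
      and c3: "\<forall>i<N. U $$ (i,a) \<noteq> 0 \<longrightarrow> (c \<longrightarrow> oiN N i \<subseteq> Z) \<and> (\<not>c \<longrightarrow> oiN N i \<inter> Z = {})"
      using H[rule_format, OF a] by blast
    define cc :: complex where "cc = (if c then 1 else 0)"
    have trm: "cnj (U $$ (i,a)) * dv N Z i * U $$ (i,b) = cc * (cadjoint U $$ (a,i) * U $$ (i,b))"
      if i: "i < N" for i
    proof (cases "U $$ (i,a) = 0")
      case True then show ?thesis using i a UC by (simp add: cadj_index)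
    next
      case False
      have "dv N Z i = cc"
      proof (cases c)
        case True
        have s: "oiN N i \<subseteq> Z" using c3 i False True by blast
        show ?thesis using dval1[OF N s] True unfolding cc_def dv_def by simp
      next
        case F: False
        have s: "oiN N i \<inter> Z = {}" using c3 i False F by blast
        show ?thesis using dval0[OF s] F unfolding cc_def dv_def by simp
      qed
      then show ?thesis using i a UC by (simp add: cadj_index)
    qed
    have "(cadjoint U * Pop N Z * U) $$ (a,b) = (\<Sum>i\<in>{0..<N}. (cadjoint U * Pop N Z) $$ (a,i) * U $$ (i,b))"
      using a b C P UC by (simp add: scalar_prod_def del: assoc_mult_mat)
    also have "\<dots> = (\<Sum>i\<in>{0..<N}. cc * (cadjoint U $$ (a,i) * U $$ (i,b)))"
      by (rule sum.cong) (use a CP trm in auto)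
    also have "\<dots> = cc * (cadjoint U * U) $$ (a,b)"
      using a b C UC by (simp add: scalar_prod_def sum_distrib_left)
    also have "\<dots> = cc * (if a = b then 1 else 0)" using h1 a b by simp
    also have "\<dots> = Pop N W $$ (a,b)"
    proof (cases c)
      case True
      then show ?thesis using dval1[OF N c1[rule_format, OF True]] a b
        unfolding cc_def by (cases "a = b") (auto simp: Pop_index dv_def)
    next
      case False
      then show ?thesis using dval0[OF c2[rule_format, OF False]] a b
        unfolding cc_def by (cases "a = b") (auto simp: Pop_index dv_def)
    qed
    finally show "(cadjoint U * Pop N Z * U) $$ (a,b) = Pop N W $$ (a,b)" .
  qed
qed




definition oi :: "nat \<Rightarrow> nat \<Rightarrow> nat \<Rightarrow> real set" where
  "oi p r c = {real c / real p ^ r <..< (real c + 1) / real p ^ r}"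

definition good :: "nat \<Rightarrow> nat \<Rightarrow> real set \<Rightarrow> bool" where
  "good p r Z \<longleftrightarrow> (\<forall>c. oi p r c \<subseteq> Z \<or> oi p r c \<inter> Z = {})"

lemma oiN_oi: "oiN (p ^ k) i = oi p k i"
  unfolding oiN_def oi_def by simp

lemma ivl_sub:
  fixes M :: real and A B i :: nat
  assumes "M > 0" "A \<le> i" "i + 1 \<le> B"
  shows "{real i / M <..< (real i + 1) / M} \<subseteq> {real A / M <..< real B / M}"
proof -
  have "real A / M \<le> real i / M" using assms by (simp add: divide_right_mono)
  moreover have "real i + 1 \<le> real B" using assms(3) by (metis of_nat_1 of_nat_add of_nat_le_iff)
  then have "(real i + 1) / M \<le> real B / M"
    using assms(1) by (intro divide_right_mono) simp_all
  ultimately show ?thesis by auto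
qed

lemma ivl_hit:
  fixes M y :: real and A B i :: nat
  assumes "M > 0" "real i / M \<le> y" "y \<le> (real i + 1) / M" "real A / M < y" "y < real B / M"
  shows "A \<le> i \<and> i + 1 \<le> B"
proof -
  have "real i / M < real B / M" using assms by linarith
  then have "real i < real B" using assms(1) by (simp add: divide_less_cancel)
  moreover have "real A / M < (real i + 1) / M" using assms by linarith
  then have "real A < real i + 1" using assms(1) by (simp add: divide_less_cancel)
  ultimately show ?thesis by linarith
qed

lemma oi_scale:
  assumes "p > 0" "s \<le> k"
  shows "oi p s c = {real (c * p ^ (k - s)) / real p ^ k <..< real ((c + 1) * p ^ (k - s)) / real p ^ k}"
proof -
  have kk: "k = s + (k - s)" using assms by simp
  have e: "real p ^ k = real p ^ s * real p ^ (k - s)"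
    by (subst kk) (simp only: power_add)
  have q: "real p ^ (k - s) \<noteq> 0" using assms by simp
  have e1: "real (c * p ^ (k - s)) / real p ^ k = real c / real p ^ s"
    unfolding e using q by simp
  have e3: "real ((c + 1) * p ^ (k - s)) = (real c + 1) * real p ^ (k - s)" by (simp add: algebra_simps)
  have e2: "real ((c + 1) * p ^ (k - s)) / real p ^ k = (real c + 1) / real p ^ s"
    unfolding e e3 using q by (rule nonzero_mult_divide_mult_cancel_right)
  show ?thesis unfolding oi_def e1 e2 ..
qed

lemma refine:
  assumes p: "p > 0" and r: "r \<le> r'" and g: "good p r Z"
  shows "good p r' Z"
  unfolding good_def
proof
  fix c
  let ?q = "p ^ (r' - r)"
  define d where "d = c div ?q"
  have q: "?q > 0" using p by simp
  have "d * ?q \<le> c" unfolding d_def by simp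
  moreover have "c + 1 \<le> (d + 1) * ?q"
  proof -
    have "c < (d + 1) * ?q" using dividend_less_div_times[OF q, of c] unfolding d_def
      by (simp add: algebra_simps)
    then show ?thesis by simp
  qed
  ultimately have "oi p r' c \<subseteq> oi p r d"
    unfolding oi_scale[OF p r, of d] unfolding oi_def
    using ivl_sub[of "real p ^ r'" "d * ?q" c "(d+1) * ?q"] p by simp
  then show "oi p r' c \<subseteq> Z \<or> oi p r' c \<inter> Z = {}" using g unfolding good_def by blast
qed

lemma sub_oi:
  assumes p: "p > 0" and s: "s \<le> k" and y: "y \<in> Eint (p ^ k) i" "y \<in> oi p s c"
  shows "oi p k i \<subseteq> oi p s c"
proof -
  let ?M = "real p ^ k"
  have M: "?M > 0" using p by simp
  have y2: "real (c * p ^ (k - s)) / ?M < y" "y < real ((c + 1) * p ^ (k - s)) / ?M"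
    using y(2) unfolding oi_scale[OF p s] by auto
  have y1: "real i / ?M \<le> y" "y \<le> (real i + 1) / ?M" using y(1) unfolding Eint_def by auto
  have "c * p ^ (k - s) \<le> i \<and> i + 1 \<le> (c + 1) * p ^ (k - s)"
    by (rule ivl_hit[OF M y1 y2])
  then show ?thesis unfolding oi_scale[OF p s] unfolding oi_def
    using ivl_sub[OF M] by blast
qed

lemma oi_01: "p > 0 \<Longrightarrow> c < p ^ s \<Longrightarrow> oi p s c \<subseteq> {0..1}"
proof -
  assume p: "p > 0" and c: "c < p ^ s"
  have M: "real p ^ s > 0" using p by simp
  have "c + 1 \<le> p ^ s" using c by simp
  then have "real (c + 1) \<le> real (p ^ s)" by (simp only: of_nat_le_iff)
  then have "real c + 1 \<le> real p ^ s" by simp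
  then have "(real c + 1) / real p ^ s \<le> 1" using M by simp
  moreover have "0 \<le> real c / real p ^ s" by simp
  ultimately show ?thesis unfolding oi_def
  proof (intro subsetI)
    fix x assume a: "(real c + 1) / real p ^ s \<le> 1" "0 \<le> real c / real p ^ s"
      and x: "x \<in> {real c / real p ^ s<..<(real c + 1) / real p ^ s}"
    then have "real c / real p ^ s < x" "x < (real c + 1) / real p ^ s" by auto
    have x0: "0 \<le> x"
    proof -
      have "0 \<le> real c / real p ^ s" by simp
      then show ?thesis using \<open>real c / real p ^ s < x\<close> by (rule order_trans[OF _ less_imp_le])
    qed
    show "x \<in> {0..1}" using a x0 \<open>x < (real c + 1) / real p ^ s\<close> by simp
  qed
qed

lemma oi_out01: "p > 0 \<Longrightarrow> \<not> c < p ^ s \<Longrightarrow> oi p s c \<inter> {0..1} = {}"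
proof -
  assume p: "p > 0" and c: "\<not> c < p ^ s"
  have M: "real p ^ s > 0" using p by simp
  have "p ^ s \<le> c" using c by simp
  then have "real (p ^ s) \<le> real c" by (simp only: of_nat_le_iff)
  then have "real p ^ s \<le> real c" by simp
  then have "1 \<le> real c / real p ^ s" using M by simp
  then show ?thesis unfolding oi_def by auto
qed

lemma good_01: "p > 0 \<Longrightarrow> good p r {0..1}"
  unfolding good_def using oi_01 oi_out01 by blast

lemma good_Int: "good p r A \<Longrightarrow> good p r B \<Longrightarrow> good p r (A \<inter> B)"
  unfolding good_def by blast

lemma cyl_eq:
  assumes p: "p > 0"
  shows "cylinder p xs = {real (\<Sum>k<length xs. xs ! k * p ^ (length xs - Suc k)) / real p ^ length xs ..
      (real (\<Sum>k<length xs. xs ! k * p ^ (length xs - Suc k)) + 1) / real p ^ length xs}"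
proof -
  let ?m = "length xs"
  have "(\<Sum>k<?m. real (xs ! k) / real p ^ (Suc k)) =
        (\<Sum>k<?m. real (xs ! k * p ^ (?m - Suc k)) / real p ^ ?m)"
  proof (rule sum.cong)
    fix k assume k: "k \<in> {..<?m}"
    have kk: "?m = Suc k + (?m - Suc k)" using k by simp
    have e: "real p ^ ?m = real p ^ Suc k * real p ^ (?m - Suc k)"
      by (subst kk) (simp only: power_add)
    show "real (xs ! k) / real p ^ (Suc k) = real (xs ! k * p ^ (?m - Suc k)) / real p ^ ?m"
      unfolding e using p by (simp add: field_simps)
  qed simp
  also have "\<dots> = real (\<Sum>k<?m. xs ! k * p ^ (?m - Suc k)) / real p ^ ?m"
    by (simp add: sum_divide_distrib)
  finally show ?thesis unfolding cylinder_def Let_def by (simp add: add_divide_distrib)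
qed

lemma good_cyl:
  assumes p: "p > 0" shows "good p (length xs) (cylinder p xs)"
  unfolding good_def
proof
  fix c
  define C where "C = (\<Sum>k<length xs. xs ! k * p ^ (length xs - Suc k))"
  let ?M = "real p ^ length xs"
  have M: "?M > 0" using p by simp
  have cy: "cylinder p xs = {real C / ?M .. (real C + 1) / ?M}" unfolding C_def by (rule cyl_eq[OF p])
  consider "c = C" | "c + 1 \<le> C" | "C + 1 \<le> c" by linarith
  then show "oi p (length xs) c \<subseteq> cylinder p xs \<or> oi p (length xs) c \<inter> cylinder p xs = {}"
  proof cases
    case 1 then show ?thesis unfolding cy oi_def by auto
  next
    case 2
    then have "real c + 1 \<le> real C" by (metis of_nat_1 of_nat_add of_nat_le_iff)
    then have "(real c + 1) / ?M \<le> real C / ?M" using M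
      by (intro divide_right_mono) simp_all
    then show ?thesis unfolding cy oi_def by auto
  next
    case 3
    then have "real C + 1 \<le> real c" by (metis of_nat_1 of_nat_add of_nat_le_iff)
    then have "(real C + 1) / ?M \<le> real c / ?M" using M
      by (intro divide_right_mono) simp_all
    then show ?thesis unfolding cy oi_def by auto
  qed
qed




lemma G:
  assumes p: "p \<ge> 2" and ne: "ns \<noteq> []"
    and sum1: "(\<Sum>j<length ns. 1 / real p ^ (ns ! j)) = 1"
    and c1: "condition1 p ns T" and r: "Max (set ns) \<le> r" and c: "c < p ^ r"
  shows "\<exists>j<length ns. \<exists>c'. ns!j \<le> r \<and> c' < p ^ (r - ns!j) \<and>
           (\<forall>x\<in>oi p r c. T x \<in> oi p (r - ns!j) c')"
proof -
  define L where "L j = (\<Sum>i<j. p ^ (r - ns!i))" for j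
  have p0: "real p > 0" using p by simp
  have nle: "ns!i \<le> r" if "i < length ns" for i
    using that r by (meson Max_ge List.finite_set nth_mem order_trans)
  have split: "real p ^ r = real p ^ (ns!i) * real p ^ (r - ns!i)" if "i < length ns" for i
  proof -
    have kk: "r = ns!i + (r - ns!i)" using nle[OF that] by simp
    show ?thesis by (subst kk) (simp only: power_add)
  qed
  have LE: "left_end p ns j = real (L j) / real p ^ r" if "j \<le> length ns" for j
  proof -
    have "left_end p ns j = (\<Sum>i<j. real (p ^ (r - ns!i)) / real p ^ r)"
      unfolding left_end_def
    proof (rule sum.cong)
      fix i assume "i \<in> {..<j}"
      then have i: "i < length ns" using that by simp
      have q: "real p ^ (r - ns!i) \<noteq> 0" using p0 by simp
      show "1 / real p ^ (ns ! i) = real (p ^ (r - ns!i)) / real p ^ r"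
        unfolding split[OF i] using q by simp
    qed simp
    also have "\<dots> = real (L j) / real p ^ r" unfolding L_def by (simp add: sum_divide_distrib)
    finally show ?thesis .
  qed
  have Llen: "L (length ns) = p ^ r"
  proof -
    have "real (L (length ns)) / real p ^ r = 1" using LE[of "length ns"] sum1
      unfolding left_end_def by simp
    then have "real (L (length ns)) = real (p ^ r)" using p0 by simp
    then show ?thesis by (simp only: of_nat_eq_iff)
  qed
  have LS: "L (Suc j) = L j + p ^ (r - ns!j)" for j unfolding L_def by simp
  define S where "S = {j. j < length ns \<and> L j \<le> c}"
  have finS: "finite S" unfolding S_def by simp
  have "0 \<in> S" unfolding S_def L_def using ne by simp
  define j where "j = Max S"
  have jS: "j \<in> S" unfolding j_def using finS \<open>0 \<in> S\<close> by (intro Max_in) auto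
  then have jl: "j < length ns" and Lj: "L j \<le> c" unfolding S_def by auto
  have cL: "c < L (Suc j)"
  proof (cases "Suc j < length ns")
    case True
    have "Suc j \<notin> S"
    proof
      assume "Suc j \<in> S"
      then have "Suc j \<le> j" unfolding j_def using finS by simp
      then show False by simp
    qed
    then show ?thesis using True unfolding S_def by auto
  next
    case False
    then have "Suc j = length ns" using jl by simp
    then show ?thesis using Llen c by simp
  qed
  define c' where "c' = c - L j"
  have c'b: "c' < p ^ (r - ns!j)" using cL Lj unfolding c'_def LS by simp
  have rc': "real c' = real c - real (L j)" unfolding c'_def using Lj by simp
  let ?P = "real p ^ (r - ns!j)" and ?Q = "real p ^ (ns!j)"
  have P0: "?P > 0" and Q0: "?Q > 0" using p0 by simp_all
  have sp: "real p ^ r = ?Q * ?P" using split[OF jl] .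
  have "\<forall>x\<in>oi p r c. T x \<in> oi p (r - ns!j) c'"
  proof
    fix x assume x: "x \<in> oi p r c"
    then have x1: "real c / real p ^ r < x" and x2: "x < (real c + 1) / real p ^ r"
      unfolding oi_def by auto
    define y where "y = x * real p ^ r"
    have y1: "real c < y" using x1 p0 unfolding y_def by (simp add: divide_less_eq)
    have y2: "y < real c + 1" using x2 p0 unfolding y_def by (simp add: less_divide_eq)
    have "left_end p ns j = real (L j) / real p ^ r" using LE jl by simp
    also have "\<dots> \<le> real c / real p ^ r" using Lj p0 by (simp add: divide_right_mono)
    finally have a1: "left_end p ns j < x" using x1 by linarith
    have "(real c + 1) / real p ^ r \<le> real (L (Suc j)) / real p ^ r"
    proof -
      have "c + 1 \<le> L (Suc j)" using cL by simp
      then have "real (c + 1) \<le> real (L (Suc j))" by (simp only: of_nat_le_iff)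
      then show ?thesis using p0 by (intro divide_right_mono) simp_all
    qed
    also have "\<dots> = left_end p ns (Suc j)" using LE[of "Suc j"] jl by simp
    finally have a2: "x < left_end p ns (Suc j)" using x2 by linarith
    have Tx: "T x = ?Q * (x - real (L j) / real p ^ r)"
      using c1 jl a1 a2 LE jl unfolding condition1_def by auto
    have Pn: "?P \<noteq> 0" and Qn: "?Q \<noteq> 0" using P0 Q0 by auto
    have e1: "?Q * (x - real (L j) / (?Q * ?P)) = ?Q * x - real (L j) / ?P"
      using Qn p by (simp add: right_diff_distrib)
    have e2: "(x * (?Q * ?P) - real (L j)) / ?P = ?Q * x - real (L j) / ?P"
      using Pn p by (simp add: diff_divide_distrib)
    have Tx2: "T x = (y - real (L j)) / ?P"
      unfolding Tx y_def sp e1 e2 ..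
    have "real c' / ?P < T x" unfolding Tx2 rc' using P0 y1
      by (intro divide_strict_right_mono) simp_all
    moreover have "T x < (real c' + 1) / ?P" unfolding Tx2 rc' using P0 y2
      by (intro divide_strict_right_mono) simp_all
    ultimately show "T x \<in> oi p (r - ns!j) c'" unfolding oi_def by simp
  qed
  then show ?thesis using jl nle[OF jl] c'b by blast
qed




lemma transfer:
  assumes "\<forall>x\<in>A1. 0 \<le> x \<and> x \<le> 1 \<and> T x \<in> B1" "B1 \<subseteq> {0..1}"
  shows "B1 \<subseteq> preim T n Y \<Longrightarrow> A1 \<subseteq> preim T (Suc n) Y"
    and "B1 \<inter> preim T n Y = {} \<Longrightarrow> A1 \<inter> preim T (Suc n) Y = {}"
proof -
  have key: "x \<in> preim T (Suc n) Y \<longleftrightarrow> T x \<in> preim T n Y" if "x \<in> A1" for x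
  proof -
    have e: "(T ^^ Suc n) x = (T ^^ n) (T x)" by (simp only: funpow_Suc_right o_apply)
    show ?thesis using assms that e unfolding preim_def by (auto simp del: funpow.simps)
  qed
  show "B1 \<subseteq> preim T n Y \<Longrightarrow> A1 \<subseteq> preim T (Suc n) Y" using key assms(1) by blast
  show "B1 \<inter> preim T n Y = {} \<Longrightarrow> A1 \<inter> preim T (Suc n) Y = {}" using key assms(1) by blast
qed

lemma nj_le: "j < length ns \<Longrightarrow> ns ! j \<le> Max (set ns)"
  by (simp add: Max_ge)

lemma goodA:
  assumes p: "p \<ge> 2" and ne: "ns \<noteq> []"
    and sum1: "(\<Sum>j<length ns. 1 / real p ^ (ns ! j)) = 1"
    and c1: "condition1 p ns T"
  shows "good p (length xs + n * Max (set ns)) (preim T n (cylinder p xs))"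
proof (induction n)
  case 0
  have "preim T 0 (cylinder p xs) = {0..1} \<inter> cylinder p xs" unfolding preim_def by auto
  then show ?case using good_Int good_01 good_cyl p by simp
next
  case (Suc n)
  let ?nm = "Max (set ns)" and ?Y = "cylinder p xs"
  let ?r = "length xs + Suc n * ?nm"
  have p0: "p > 0" using p by simp
  show ?case unfolding good_def
  proof
    fix c
    show "oi p ?r c \<subseteq> preim T (Suc n) ?Y \<or> oi p ?r c \<inter> preim T (Suc n) ?Y = {}"
    proof (cases "c < p ^ ?r")
      case False
      then have "oi p ?r c \<inter> {0..1} = {}" using oi_out01 p0 by blast
      moreover have "preim T (Suc n) ?Y \<subseteq> {0..1}" unfolding preim_def by auto
      ultimately show ?thesis by blast
    next
      case True
      have "?nm \<le> ?r" by simp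
      from G[OF p ne sum1 c1 this True] obtain j c' where j: "j < length ns" "ns!j \<le> ?r"
        "c' < p ^ (?r - ns!j)" "\<forall>x\<in>oi p ?r c. T x \<in> oi p (?r - ns!j) c'" by blast
      have "length xs + n * ?nm \<le> ?r - ns!j" using nj_le[OF j(1)] by simp
      then have g: "good p (?r - ns!j) (preim T n ?Y)" using refine[OF p0 _ Suc.IH] by blast
      have h1: "\<forall>x\<in>oi p ?r c. 0 \<le> x \<and> x \<le> 1 \<and> T x \<in> oi p (?r - ns!j) c'"
        using j(4) oi_01[OF p0 True] by auto
      have h2: "oi p (?r - ns!j) c' \<subseteq> {0..1}" using oi_01[OF p0 j(3)] .
      show ?thesis using g transfer[OF h1 h2] unfolding good_def by blast
    qed
  qed
qed

lemma assoc5: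
  assumes "A \<in> carrier_mat N N" "B \<in> carrier_mat N N" "C \<in> carrier_mat N N"
    "D \<in> carrier_mat N N" "E \<in> carrier_mat N N"
  shows "A * B * C * (D * E) = A * (B * C * D) * E"
proof -
  have ab: "A * B \<in> carrier_mat N N" "B * C \<in> carrier_mat N N" using assms by auto
  have abc: "A * B * C \<in> carrier_mat N N" "B * C * D \<in> carrier_mat N N" using assms ab by auto
  have "A * B * C * (D * E) = (A * B * C * D) * E"
    using assoc_mult_mat[OF abc(1) assms(4) assms(5)] by simp
  also have "\<dots> = (A * (B * C) * D) * E" using assoc_mult_mat[OF assms(1-3)] by simp
  also have "\<dots> = A * (B * C * D) * E" using assoc_mult_mat[OF assms(1) ab(2) assms(4)] by simp
  finally show ?thesis .
qed

lemma pow_Suc': "A \<in> carrier_mat N N \<Longrightarrow> A ^\<^sub>m Suc k = A * A ^\<^sub>m k"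
proof (induction k)
  case 0 then show ?case by simp
next
  case (Suc k)
  have "A ^\<^sub>m Suc (Suc k) = (A * A ^\<^sub>m k) * A" using Suc by simp
  also have "\<dots> = A * (A ^\<^sub>m k * A)" by (rule assoc_mult_mat[OF Suc.prems pow_carrier_mat[OF Suc.prems] Suc.prems])
  finally show ?case by simp
qed

lemma Pop_01:
  assumes "N > 0"
  shows "Pop N Y = Pop N ({0..1} \<inter> Y)"
proof -
  have "Eint N i \<inter> Y = Eint N i \<inter> ({0..1} \<inter> Y)" if "i < N" for i
  proof -
    have "real i + 1 \<le> real N" using that by simp
    then have "(real i + 1) / real N \<le> 1" using assms by simp
    moreover have "0 \<le> real i / real N" by simp
    ultimately have "Eint N i \<subseteq> {0..1}" unfolding Eint_def by auto
    then show ?thesis by blast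
  qed
  then show ?thesis unfolding Pop_def by (intro cong_mat) auto
qed

lemma mainB:
  assumes p: "p \<ge> 2" and ne: "ns \<noteq> []" and pos: "\<forall>j < length ns. ns ! j \<ge> 1"
    and sum1: "(\<Sum>j<length ns. 1 / real p ^ (ns ! j)) = 1"
    and c1: "condition1 p ns T" and q: "quantization T (p ^ k) U"
  shows "(n + length xs) * Max (set ns) \<le> k \<Longrightarrow>
     cadjoint U ^\<^sub>m n * Pop (p ^ k) (cylinder p xs) * U ^\<^sub>m n = Pop (p ^ k) (preim T n (cylinder p xs))"
proof (induction n)
  let ?N = "p ^ k" and ?Y = "cylinder p xs"
  have p0: "p > 0" using p by simp
  have N0: "?N > 0" using p0 by simp
  have U: "unitary_mat ?N U" using q unfolding quantization_def by simp
  have UC: "U \<in> carrier_mat ?N ?N" using U unfolding unitary_mat_def by simp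
  have VC: "cadjoint U \<in> carrier_mat ?N ?N" using UC by (rule cadj_carrier)
  have PC: "Pop ?N Z \<in> carrier_mat ?N ?N" for Z unfolding Pop_def by simp
  {
    case 0
    have "preim T 0 ?Y = {0..1} \<inter> ?Y" unfolding preim_def by auto
    then show ?case using VC UC PC[of ?Y] Pop_01[OF N0, of ?Y] by simp
  next
    case (Suc n)
    let ?nm = "Max (set ns)"
    have nm1: "1 \<le> ?nm" using ne pos nj_le[of 0 ns] by (metis length_greater_0_conv order_trans)
    have big: "(Suc n + length xs) * ?nm = ?nm + n * ?nm + length xs * ?nm"
      by (simp add: algebra_simps)
    have mm: "length xs \<le> length xs * ?nm" using nm1 by simp
    have IH: "cadjoint U ^\<^sub>m n * Pop ?N ?Y * U ^\<^sub>m n = Pop ?N (preim T n ?Y)"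
      using Suc by (intro Suc.IH) (simp add: algebra_simps)
    have "cadjoint U ^\<^sub>m Suc n * Pop ?N ?Y * U ^\<^sub>m Suc n =
          cadjoint U * (cadjoint U ^\<^sub>m n * Pop ?N ?Y * U ^\<^sub>m n) * U"
      unfolding pow_Suc'[OF VC] pow_mat.simps(2)[of U]
      by (rule assoc5[OF VC pow_carrier_mat[OF VC] PC pow_carrier_mat[OF UC] UC])
    also have "\<dots> = cadjoint U * Pop ?N (preim T n ?Y) * U" using IH by simp
    also have "\<dots> = Pop ?N (preim T (Suc n) ?Y)"
    proof (rule step_mat[OF U N0], intro allI impI)
      fix a assume a: "a < ?N"
      have kn: "?nm \<le> k" using Suc.prems big by linarith
      from G[OF p ne sum1 c1 kn a] obtain j c' where j: "j < length ns" "ns!j \<le> k"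
        "c' < p ^ (k - ns!j)" "\<forall>x\<in>oi p k a. T x \<in> oi p (k - ns!j) c'" by blast
      let ?O = "oi p (k - ns!j) c'" and ?Z = "preim T n ?Y" and ?W = "preim T (Suc n) ?Y"
      have "length xs + n * ?nm \<le> k - ns!j" using nj_le[OF j(1)] Suc.prems big mm by linarith
      then have g: "good p (k - ns!j) ?Z"
        using refine[OF p0 _ goodA[OF p ne sum1 c1, of xs n]] by blast
      have h1: "\<forall>x\<in>oi p k a. 0 \<le> x \<and> x \<le> 1 \<and> T x \<in> ?O"
        using j(4) oi_01[OF p0 a] by auto
      have h2: "?O \<subseteq> {0..1}" using oi_01[OF p0 j(3)] .
      have hit: "oi p k i \<subseteq> ?O" if i: "i < ?N" "U $$ (i,a) \<noteq> 0" for i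
      proof -
        have "Bmat T ?N a i = (cmod (U $$ (i,a)))\<^sup>2" using q i a unfolding quantization_def by simp
        then have "Bmat T ?N a i \<noteq> 0" using i by simp
        from Bpos[OF this] obtain x where x: "x \<in> oiN ?N a" "T x \<in> Eint ?N i" by blast
        have "T x \<in> ?O" using x(1) j(4) unfolding oiN_oi by blast
        then show ?thesis using sub_oi[OF p0 _ x(2)] by simp
      qed
      define cc where "cc = (?O \<subseteq> ?Z)"
      show "\<exists>c. (c \<longrightarrow> oiN ?N a \<subseteq> ?W) \<and> (\<not> c \<longrightarrow> oiN ?N a \<inter> ?W = {}) \<and>
         (\<forall>i<?N. U $$ (i, a) \<noteq> 0 \<longrightarrow> (c \<longrightarrow> oiN ?N i \<subseteq> ?Z) \<and> (\<not> c \<longrightarrow> oiN ?N i \<inter> ?Z = {}))"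
      proof (intro exI[of _ cc] conjI impI allI)
        assume "cc" then show "oiN ?N a \<subseteq> ?W" unfolding oiN_oi cc_def using transfer(1)[OF h1 h2] by blast
      next
        assume "\<not> cc" then have "?O \<inter> ?Z = {}" using g unfolding good_def cc_def by blast
        then show "oiN ?N a \<inter> ?W = {}" unfolding oiN_oi using transfer(2)[OF h1 h2] by blast
      next
        fix i assume "i < ?N" "U $$ (i, a) \<noteq> 0" "cc"
        then show "oiN ?N i \<subseteq> ?Z" unfolding oiN_oi cc_def using hit by blast
      next
        fix i assume "i < ?N" "U $$ (i, a) \<noteq> 0" "\<not> cc"
        then have "?O \<inter> ?Z = {}" using g unfolding good_def cc_def by blast
        then show "oiN ?N i \<inter> ?Z = {}" unfolding oiN_oi using hit \<open>i < ?N\<close> \<open>U $$ (i, a) \<noteq> 0\<close> by blast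
      qed
    qed
    finally show ?case .
  }
qed




theorem corollary1:
  fixes p :: nat and ns :: "nat list" and T :: "real \<Rightarrow> real"
    and k :: nat and U :: "complex mat" and xs :: "nat list" and n :: nat
  assumes "p \<ge> 2"
    and "ns \<noteq> []"
    and "\<forall>j < length ns. ns ! j \<ge> 1"
    and "(\<Sum>j<length ns. 1 / real p ^ (ns ! j)) = 1"
    and "condition1 p ns T"
    and "quantization T (p ^ k) U"
    and "\<forall>d \<in> set xs. d < p"
    and "n + length xs \<le>
           nat \<lfloor>ln (real (p ^ k)) / ln (Max {real p ^ (ns ! j) | j. j < length ns})\<rfloor>"
  shows "mat_neg_pow (p ^ k) U n * Pop (p ^ k) (cylinder p xs) * U ^\<^sub>m n
           = Pop (p ^ k) (preim T n (cylinder p xs))"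
proof -
  note p = assms(1) and ne = assms(2) and pos = assms(3) and sum1 = assms(4)
    and c1 = assms(5) and q = assms(6) and bd = assms(8)
  define nm where "nm = Max (set ns)"
  have nm1: "1 \<le> nm" unfolding nm_def using ne pos nj_le[of 0 ns]
    by (metis length_greater_0_conv order_trans)
  have seteq: "{real p ^ (ns ! j) | j. j < length ns} = (\<lambda>e. real p ^ e) ` set ns"
    by (auto simp: in_set_conv_nth intro!: imageI nth_mem)
  have mono: "mono (\<lambda>e::nat. real p ^ e)"
    by (rule monoI) (use p in \<open>simp add: power_increasing\<close>)
  have maxeq: "Max {real p ^ (ns ! j) | j. j < length ns} = real p ^ nm"
    unfolding seteq nm_def using mono_Max_commute[OF mono, of "set ns"] ne by simp
  have lnp: "ln (real p) > 0" using p by simp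
  have "ln (real (p ^ k)) / ln (Max {real p ^ (ns ! j) | j. j < length ns}) = real k / real nm"
    unfolding maxeq of_nat_power ln_realpow using lnp nm1 by simp
  then have "nat \<lfloor>ln (real (p ^ k)) / ln (Max {real p ^ (ns ! j) | j. j < length ns})\<rfloor> = k div nm"
    by (simp add: floor_divide_of_nat_eq)
  then have "n + length xs \<le> k div nm" using bd by simp
  then have "(n + length xs) * nm \<le> (k div nm) * nm" by simp
  also have "\<dots> \<le> k" by simp
  finally have le: "(n + length xs) * Max (set ns) \<le> k" unfolding nm_def .
  have U: "unitary_mat (p ^ k) U" using q unfolding quantization_def by simp
  show ?thesis unfolding mat_neg_pow_def mat_inv_unitary[OF U]
    using mainB[OF p ne pos sum1 c1 q le] .
qed


end
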